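(* Let $d,n\ge 1$, let $\boldsymbol{a}_1,\ldots,\boldsymbol{a}_n\in\mathbf{R}^d$, let $w_1,\ldots,w_n>0$, fix $\varepsilon>0$ and $0<p\le 2$. Let $\boldsymbol{x}^{(0)}\in\mathbf{R}^d$ be arbitrary and define, for $t\ge 0$, $$\mu_j^{(t)}=w_j\,(\lVert\boldsymbol{x}^{(t)}-\boldsymbol{a}_j\rVert^2+\varepsilon)^{p/2-1},\qquad \boldsymbol{x}^{(t+1)}=\frac{\sum_j\mu_j^{(t)}\boldsymbol{a}_j}{\sum_j\mu_j^{(t)}}.$$ Then $\lVert\boldsymbol{x}^{(t)}-\boldsymbol{x}^{(t+1)}\rVert\to 0$ as $t\to\infty$.
   Context: $\lVert\cdot\rVert$ is the Euclidean norm on $\mathbf{R}^d$. *)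

theory Defs
  imports "HOL-Analysis.Analysis"
begin

end

theory Submission
  imports Defs
begin

lemma concave_powr_aux:
  fixes u v q :: real
  assumes "u > 0" "v > 0" "0 < q" "q \<le> 1"
  shows "u powr q \<le> v powr q + q * v powr (q - 1) * (u - v)"
proof -
  have 1: "u powr q * v powr (1 - q) \<le> q * u + (1 - q) * v"
    using Youngs_inequality_0[of q "1 - q" u v] assms by simp
  have 2: "v powr (1 - q) * v powr (q - 1) = 1"
    using assms by (simp flip: powr_add)
  have 3: "v * v powr (q - 1) = v powr q"
    using powr_add[of v 1 "q - 1"] assms by simp
  have pos: "v powr (q - 1) \<ge> 0" by simp
  have "u powr q * v powr (1 - q) * v powr (q - 1) \<le> (q * u + (1 - q) * v) * v powr (q - 1)"
    using mult_right_mono[OF 1 pos] .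
  also have "u powr q * v powr (1 - q) * v powr (q - 1) = u powr q"
    using 2 by (simp add: mult.assoc)
  also have "(q * u + (1 - q) * v) * v powr (q - 1) = q * u * v powr (q - 1) + (1 - q) * (v * v powr (q - 1))"
    by (simp add: algebra_simps)
  also have "\<dots> = v powr q + q * v powr (q - 1) * (u - v)"
    using 3 by (simp add: algebra_simps)
  finally show ?thesis .
qed

lemma quad_identity:
  fixes \<mu> :: "nat \<Rightarrow> real" and a :: "nat \<Rightarrow> 'a::real_inner" and x y :: 'a
  assumes M: "M = (\<Sum>j<n. \<mu> j)" "M \<noteq> 0"
    and y: "y = (\<Sum>j<n. \<mu> j *\<^sub>R a j) /\<^sub>R M"
  shows "(\<Sum>j<n. \<mu> j * (norm (y - a j) ^ 2 - norm (x - a j) ^ 2)) = - M * norm (x - y) ^ 2"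
proof -
  have sy: "(\<Sum>j<n. \<mu> j *\<^sub>R a j) = M *\<^sub>R y"
    using M y by simp
  have e: "\<And>j. norm (y - a j) ^ 2 - norm (x - a j) ^ 2 = y \<bullet> y - x \<bullet> x - 2 * ((y - x) \<bullet> a j)"
    by (simp add: power2_norm_eq_inner inner_diff_left inner_diff_right inner_commute algebra_simps)
  have "(\<Sum>j<n. \<mu> j * (norm (y - a j) ^ 2 - norm (x - a j) ^ 2))
      = (\<Sum>j<n. \<mu> j) * (y \<bullet> y - x \<bullet> x) - 2 * ((y - x) \<bullet> (\<Sum>j<n. \<mu> j *\<^sub>R a j))"
    by (simp add: e inner_sum_right sum_distrib_left sum_distrib_right sum_subtractf right_diff_distrib
          mult.left_commute)
  also have "\<dots> = M * (y \<bullet> y - x \<bullet> x) - 2 * M * ((y - x) \<bullet> y)"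
    using M sy by simp
  also have "\<dots> = - M * norm (x - y) ^ 2"
    by (simp add: power2_norm_eq_inner inner_diff_left inner_diff_right inner_commute algebra_simps)
  finally show ?thesis .
qed

theorem proposition3:
  fixes a :: "nat \<Rightarrow> 'a::euclidean_space"
    and w :: "nat \<Rightarrow> real"
    and n :: nat and \<epsilon> p :: real
    and x :: "nat \<Rightarrow> 'a"
  assumes "n \<ge> 1"
    and "\<And>j. j < n \<Longrightarrow> w j > 0"
    and "\<epsilon> > 0" and "0 < p" and "p \<le> 2"
    and "\<And>t. x (Suc t) =
          (\<Sum>j<n. (w j * (norm (x t - a j) ^ 2 + \<epsilon>) powr (p / 2 - 1)) *\<^sub>R a j)
          /\<^sub>R (\<Sum>j<n. w j * (norm (x t - a j) ^ 2 + \<epsilon>) powr (p / 2 - 1))"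
  shows "(\<lambda>t. norm (x t - x (Suc t))) \<longlonglongrightarrow> 0"
proof -
  note n = assms(1) and wpos = assms(2) and ep = assms(3) and p0 = assms(4) and p2 = assms(5)
    and rec = assms(6)
  define q where "q = p / 2"
  have q0: "0 < q" and q1: "q \<le> 1" using p0 p2 by (auto simp: q_def)
  define \<mu> where "\<mu> t j = w j * (norm (x t - a j) ^ 2 + \<epsilon>) powr (p / 2 - 1)" for t j
  define M where "M t = (\<Sum>j<n. \<mu> t j)" for t
  define F where "F y = (\<Sum>j<n. w j * (norm (y - a j) ^ 2 + \<epsilon>) powr q)" for y
  have mu_nn: "\<mu> t j \<ge> 0" if "j < n" for t j
    using wpos[OF that] by (simp add: \<mu>_def)
  have mu_pos: "\<mu> t j > 0" if "j < n" for t j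
  proof -
    have "norm (x t - a j) ^ 2 + \<epsilon> > 0" using ep by (simp add: add_nonneg_pos)
    then show ?thesis using wpos[OF that] by (simp add: \<mu>_def)
  qed
  have M_ge: "M t \<ge> \<mu> t 0" for t
    unfolding M_def using n mu_nn by (intro member_le_sum) auto
  have M_pos: "M t > 0" for t
    using M_ge[of t] mu_pos[of 0 t] n by linarith
  have xs: "x (Suc t) = (\<Sum>j<n. \<mu> t j *\<^sub>R a j) /\<^sub>R M t" for t
    using rec[of t] by (simp add: \<mu>_def M_def)
  have step: "F (x (Suc t)) \<le> F (x t) - q * M t * norm (x t - x (Suc t)) ^ 2" for t
  proof -
    let ?y = "x (Suc t)"
    have each: "w j * (norm (?y - a j) ^ 2 + \<epsilon>) powr q
        \<le> w j * (norm (x t - a j) ^ 2 + \<epsilon>) powr q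
           + q * \<mu> t j * (norm (?y - a j) ^ 2 - norm (x t - a j) ^ 2)" if j: "j < n" for j
    proof -
      have "(norm (?y - a j) ^ 2 + \<epsilon>) powr q \<le> (norm (x t - a j) ^ 2 + \<epsilon>) powr q
          + q * (norm (x t - a j) ^ 2 + \<epsilon>) powr (q - 1) * ((norm (?y - a j) ^ 2 + \<epsilon>) - (norm (x t - a j) ^ 2 + \<epsilon>))"
        using ep q0 q1 by (intro concave_powr_aux) (auto simp: add_nonneg_pos)
      from mult_left_mono[OF this, of "w j"] wpos[OF j]
      show ?thesis by (simp add: \<mu>_def q_def algebra_simps)
    qed
    have "F ?y \<le> (\<Sum>j<n. w j * (norm (x t - a j) ^ 2 + \<epsilon>) powr q
           + q * \<mu> t j * (norm (?y - a j) ^ 2 - norm (x t - a j) ^ 2))"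
      unfolding F_def by (intro sum_mono each) auto
    also have "\<dots> = F (x t) + q * (\<Sum>j<n. \<mu> t j * (norm (?y - a j) ^ 2 - norm (x t - a j) ^ 2))"
      by (simp add: F_def sum.distrib sum_distrib_left mult.assoc)
    also have "(\<Sum>j<n. \<mu> t j * (norm (?y - a j) ^ 2 - norm (x t - a j) ^ 2)) = - M t * norm (x t - ?y) ^ 2"
      by (rule quad_identity[OF M_def[of t]]) (use M_pos[of t] xs[of t] in auto)
    finally show ?thesis by simp
  qed
  define S where "S = (\<Sum>j<n. norm (a j))"
  have aS: "norm (a j) \<le> S" if "j < n" for j
    unfolding S_def using that by (intro member_le_sum) auto
  have xS: "norm (x (Suc t)) \<le> S" for t
  proof -
    have "norm (\<Sum>j<n. \<mu> t j *\<^sub>R a j) \<le> (\<Sum>j<n. norm (\<mu> t j *\<^sub>R a j))"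
      by (rule norm_sum)
    also have "\<dots> \<le> (\<Sum>j<n. \<mu> t j * S)"
      using mu_nn aS by (intro sum_mono) (auto intro: mult_left_mono)
    also have "\<dots> = M t * S" by (simp add: M_def sum_distrib_right)
    finally have "norm (\<Sum>j<n. \<mu> t j *\<^sub>R a j) \<le> M t * S" .
    then show ?thesis using M_pos[of t] by (simp add: xs field_simps)
  qed
  define B where "B = max (norm (x 0)) S + S"
  have xB: "norm (x t) \<le> max (norm (x 0)) S" for t
    using xS by (cases t) (auto intro: max.coboundedI2)
  have dB: "norm (x t - a 0) \<le> B" for t
    using norm_triangle_ineq4[of "x t" "a 0"] xB[of t] aS[of 0] n unfolding B_def by linarith
  define c where "c = w 0 * (B ^ 2 + \<epsilon>) powr (p / 2 - 1)"
  have c_pos: "c > 0"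
  proof -
    have "B ^ 2 + \<epsilon> > 0" using ep by (simp add: add_nonneg_pos)
    then show ?thesis using wpos[of 0] n by (simp add: c_def)
  qed
  have M_c: "M t \<ge> c" for t
  proof -
    have "norm (x t - a 0) ^ 2 \<le> B ^ 2"
      using dB[of t] by (intro power_mono) auto
    then have "(B ^ 2 + \<epsilon>) powr (p / 2 - 1) \<le> (norm (x t - a 0) ^ 2 + \<epsilon>) powr (p / 2 - 1)"
      using p2 ep by (intro powr_mono2') (auto simp: add_nonneg_pos)
    then have "c \<le> \<mu> t 0" using wpos[of 0] n by (simp add: c_def \<mu>_def)
    then show ?thesis using M_ge[of t] by linarith
  qed
  have F_nn: "F y \<ge> 0" for y
    unfolding F_def using wpos by (intro sum_nonneg) (simp add: less_imp_le)
  have dec: "decseq (\<lambda>t. F (x t))"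
  proof (rule decseq_SucI)
    fix t
    have "q * M t * norm (x t - x (Suc t)) ^ 2 \<ge> 0" using q0 M_pos[of t] by simp
    then show "F (x (Suc t)) \<le> F (x t)" using step[of t] by linarith
  qed
  obtain L where L: "(\<lambda>t. F (x t)) \<longlonglongrightarrow> L"
    using decseq_convergent[OF dec, of 0] F_nn by blast
  have D: "(\<lambda>t. (F (x t) - F (x (Suc t))) / (q * c)) \<longlonglongrightarrow> 0"
  proof -
    have "(\<lambda>t. F (x t) - F (x (Suc t))) \<longlonglongrightarrow> L - L"
      by (intro tendsto_diff L LIMSEQ_Suc[OF L])
    then have "(\<lambda>t. (F (x t) - F (x (Suc t))) / (q * c)) \<longlonglongrightarrow> (L - L) / (q * c)"
      by (intro tendsto_divide tendsto_const) (use q0 c_pos in auto)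
    then show ?thesis by simp
  qed
  have bnd: "norm (x t - x (Suc t)) ^ 2 \<le> (F (x t) - F (x (Suc t))) / (q * c)" for t
  proof -
    have "q * c * norm (x t - x (Suc t)) ^ 2 \<le> q * M t * norm (x t - x (Suc t)) ^ 2"
      using M_c[of t] q0 by (intro mult_right_mono mult_left_mono) auto
    also have "\<dots> \<le> F (x t) - F (x (Suc t))" using step[of t] by linarith
    finally show ?thesis using q0 c_pos by (simp add: field_simps)
  qed
  have sq: "(\<lambda>t. norm (x t - x (Suc t)) ^ 2) \<longlonglongrightarrow> 0"
    by (rule tendsto_sandwich[OF _ _ tendsto_const D]) (use bnd in auto)
  have "(\<lambda>t. sqrt (norm (x t - x (Suc t)) ^ 2)) \<longlonglongrightarrow> sqrt 0"
    by (intro tendsto_real_sqrt sq)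
  then show ?thesis by simp
qed

end
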